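(* Let $E=\mathbb{R}^d$, $n\ge2$, $m_1,\dots,m_n>0$, $X=E^n\smallsetminus\Delta$, and let $U\colon X\to\mathbb{R}$ be smooth, homogeneous of degree $-\alpha$ ($\alpha>0$), invariant under all isometries of $E$ acting diagonally (in particular under $SO(d)$ acting diagonally), with $U(\mathbf{q})>0$ for all $\mathbf{q}\in X$. Let $F(\mathbf{q})=-\nabla_MU(\mathbf{q})/\lVert\nabla_MU(\mathbf{q})\rVert_M$ for $\mathbf{q}\in S$, with components $F(\mathbf{q})=(F_1(\mathbf{q}),\dots,F_n(\mathbf{q}))$, and assume $F$ satisfies: for every orthogonal projection $p\colon E\to\eta$ onto a $2$-dimensional linear subspace $\eta\subset E$ and every $\mathbf{q}\in S$ there exists $j\in\{1,\dots,n\}$ with $p(F_j(\mathbf{q}))\cdot p(\mathbf{q}_j)\ge0$, and if moreover $p(\mathbf{q}_i)\ne0$ for some $i$, then such a $j$ can be chosen with $p(\mathbf{q}_j)\neq0$. Let $\pi$ denote the quotient map by the diagonal $SO(d)$-action and $\bar F\colon S/SO(d)\to \hat S/SO(d)$ the induced map $\bar F(\pi(\mathbf{q}))=\pi(F(\mathbf{q}))$. Then \[ \pi(\operatorname{Fix}(F))=\operatorname{Fix}(\bar F), \] where $\operatorname{Fix}(\bar F)=\{\pi(\mathbf{q}):\mathbf{q}\in S,\ \bar F(\pi(\mathbf{q}))=\pi(\mathbf{q})\}$.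
   Context: $\Delta=\bigcup_{i<j}\{\mathbf{q}_i=\mathbf{q}_j\}$. Mass metric $\langle\mathbf{v},\mathbf{w}\rangle_M=\sum_jm_j\mathbf{v}_j\cdot\mathbf{w}_j$; $(\nabla_MU)_j=m_j^{-1}\partial U/\partial\mathbf{q}_j$. $V=\{\mathbf{q}\in E^n:\sum_jm_j\mathbf{q}_j=0\}$, $Y=V\cap X$, $S=\{\mathbf{q}\in Y:\lVert\mathbf{q}\rVert_M=1\}$, $\hat S=\{\mathbf{v}\in V:\lVert\mathbf{v}\rVert_M=1\}$; $F\colon S\to\hat S$. $SO(d)$ acts diagonally: $g\mathbf{q}=(g\mathbf{q}_1,\dots,g\mathbf{q}_n)$. Fixed points of $F$ are exactly the central configurations in $S$. *)

theory Defs
  imports "HOL-Analysis.Analysis"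
begin

text \<open>Bodies are indexed by a finite type 'n, positions lie in E = real^'d.
  A configuration is q :: (real^'d)^'n, with q $ j the position of body j.\<close>

text \<open>C-infinity on an open set S (real-valued): there is a family of all
  iterated derivatives G vs (vs = list of directions), G [] = f on S,
  and each G vs is differentiable at every point of S with derivative h \<mapsto> G (h # vs).\<close>
definition smooth_on :: "'a::real_normed_vector set \<Rightarrow> ('a \<Rightarrow> real) \<Rightarrow> bool" where
  "smooth_on S f \<longleftrightarrow> open S \<and> (\<exists>G :: 'a list \<Rightarrow> 'a \<Rightarrow> real.
      (\<forall>x\<in>S. G [] x = f x) \<and>
      (\<forall>vs. \<forall>x\<in>S. (G vs has_derivative (\<lambda>h. G (h # vs) x)) (at x)))"

definition Xset :: "((real^'d)^'n) set" where
  "Xset = {q. \<forall>i j. i \<noteq> j \<longrightarrow> q $ i \<noteq> q $ j}"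

definition inner_M :: "('n::finite \<Rightarrow> real) \<Rightarrow> (real^'d)^'n \<Rightarrow> (real^'d)^'n \<Rightarrow> real" where
  "inner_M m v w = (\<Sum>j\<in>UNIV. m j * (v $ j \<bullet> w $ j))"

definition norm_M :: "('n::finite \<Rightarrow> real) \<Rightarrow> (real^'d)^'n \<Rightarrow> real" where
  "norm_M m v = sqrt (inner_M m v v)"

definition Vset :: "('n::finite \<Rightarrow> real) \<Rightarrow> ((real^'d)^'n) set" where
  "Vset m = {q. (\<Sum>j\<in>UNIV. m j *\<^sub>R q $ j) = 0}"

definition Sset :: "('n::finite \<Rightarrow> real) \<Rightarrow> ((real^'d)^'n) set" where
  "Sset m = {q \<in> Vset m \<inter> Xset. norm_M m q = 1}"

definition Shat :: "('n::finite \<Rightarrow> real) \<Rightarrow> ((real^'d)^'n) set" where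
  "Shat m = {v \<in> Vset m. norm_M m v = 1}"

definition egrad :: "((real^'d)^'n \<Rightarrow> real) \<Rightarrow> (real^'d)^'n \<Rightarrow> (real^'d)^'n" where
  "egrad U q = (THE g. (U has_derivative (\<lambda>h. g \<bullet> h)) (at q))"

definition grad_M :: "('n::finite \<Rightarrow> real) \<Rightarrow> ((real^'d)^'n \<Rightarrow> real) \<Rightarrow> (real^'d)^'n \<Rightarrow> (real^'d)^'n" where
  "grad_M m U q = (\<chi> j. (1 / m j) *\<^sub>R (egrad U q $ j))"

definition Fmap :: "('n::finite \<Rightarrow> real) \<Rightarrow> ((real^'d)^'n \<Rightarrow> real) \<Rightarrow> (real^'d)^'n \<Rightarrow> (real^'d)^'n" where
  "Fmap m U q = - ((1 / norm_M m (grad_M m U q)) *\<^sub>R grad_M m U q)"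

definition SOd :: "(real^'d^'d) set" where
  "SOd = {A. orthogonal_matrix A \<and> det A = 1}"

definition act :: "real^'d^'d \<Rightarrow> (real^'d)^'n \<Rightarrow> (real^'d)^'n" where
  "act A q = (\<chi> j. A *v (q $ j))"

text \<open>Quotient map pi: a configuration goes to its SO(d)-orbit.\<close>
definition orbit_SO :: "(real^'d)^'n \<Rightarrow> ((real^'d)^'n) set" where
  "orbit_SO q = {act A q | A. A \<in> SOd}"

definition orth_proj2 :: "(real^'d \<Rightarrow> real^'d) \<Rightarrow> bool" where
  "orth_proj2 p \<longleftrightarrow> linear p \<and> (\<forall>x. p (p x) = p x) \<and> (\<forall>x y. p x \<bullet> y = x \<bullet> p y)
     \<and> dim (range p) = 2"

end

theory Submission
  imports Defs
begin



lemma psd_zero: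
  fixes B :: "'a::real_inner \<Rightarrow> 'a"
  assumes lin: "linear B" and sa: "\<And>x y. B x \<bullet> y = x \<bullet> B y"
    and psd: "\<And>y. 0 \<le> y \<bullet> B y" and e0: "e \<bullet> B e = 0"
  shows "B e = 0"
proof (rule ccontr)
  assume nz: "B e \<noteq> 0"
  define z where "z = B e"
  define s where "s = z \<bullet> z"
  define K where "K = z \<bullet> B z"
  have spos: "s > 0" using nz by (simp add: s_def z_def)
  have K0: "K \<ge> 0" using psd by (simp add: K_def)
  have expand: "(e + t *\<^sub>R z) \<bullet> B (e + t *\<^sub>R z) = 2 * t * s + t^2 * K" for t
  proof -
    have "B (e + t *\<^sub>R z) = B e + t *\<^sub>R B z" using lin by (simp add: linear_add linear_scale)
    moreover have "e \<bullet> B z = s" using sa[of e z] by (simp add: s_def z_def inner_commute)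
    ultimately show ?thesis
      using e0 by (simp add: inner_add_left inner_add_right s_def z_def K_def power2_eq_square algebra_simps inner_commute)
  qed
  define t where "t = - s / (K + 1)"
  have tneg: "t < 0" using spos K0 by (simp add: t_def)
  have "t * K > - s"
  proof -
    have "t * K = - s * (K / (K+1))" by (simp add: t_def)
    moreover have "K / (K+1) < 1" using K0 by simp
    hence "s * (K / (K+1)) < s * 1" using spos by (intro mult_strict_left_mono) auto
    ultimately show ?thesis by simp
  qed
  hence "2 * s + t * K > 0" using spos by linarith
  hence "t * (2 * s + t * K) < 0" using tneg by (simp add: mult_neg_pos)
  moreover have "0 \<le> 2 * t * s + t^2 * K" using psd[of "e + t *\<^sub>R z"] expand[of t] by simp
  ultimately show False by (simp add: power2_eq_square algebra_simps)
qed

lemma eig_max: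
  fixes M :: "'a::euclidean_space \<Rightarrow> 'a"
  assumes lin: "linear M" and sa: "\<And>x y. M x \<bullet> y = x \<bullet> M y"
  obtains e where "norm e = 1" "\<And>y. y \<bullet> M y \<le> (e \<bullet> M e) * (norm y)^2" "M e = (e \<bullet> M e) *\<^sub>R e"
proof -
  have bl: "bounded_linear M" using lin by (simp add: linear_conv_bounded_linear)
  have cont: "continuous_on (sphere 0 1) (\<lambda>x. x \<bullet> M x)"
    by (intro continuous_intros linear_continuous_on bl)
  have cpt: "compact (sphere (0::'a) 1)" by simp
  have ne: "sphere (0::'a) 1 \<noteq> {}" by simp
  obtain e where e: "e \<in> sphere 0 1" and emax: "\<And>y. y \<in> sphere 0 1 \<Longrightarrow> y \<bullet> M y \<le> e \<bullet> M e"
    using continuous_attains_sup[OF cpt ne cont] by blast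
  define \<mu> where "\<mu> = e \<bullet> M e"
  have bound: "y \<bullet> M y \<le> \<mu> * (norm y)^2" for y
  proof (cases "y = 0")
    case True then show ?thesis using lin by (simp add: linear_0)
  next
    case False
    define u where "u = (1 / norm y) *\<^sub>R y"
    have "u \<in> sphere 0 1" using False by (simp add: u_def)
    hence "u \<bullet> M u \<le> \<mu>" using emax \<mu>_def by blast
    moreover have "u \<bullet> M u = (y \<bullet> M y) / (norm y)^2"
      using lin by (simp add: u_def linear_scale power2_eq_square)
    ultimately show ?thesis using False by (simp add: divide_le_eq mult.commute)
  qed
  define B where "B x = \<mu> *\<^sub>R x - M x" for x
  have linB: "linear B" unfolding B_def by (rule linearI) (auto simp: linear_add[OF lin] linear_scale[OF lin] algebra_simps)
  have saB: "B x \<bullet> y = x \<bullet> B y" for x y using sa[of x y] by (simp add: B_def inner_diff_left inner_diff_right)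
  have psdB: "0 \<le> y \<bullet> B y" for y using bound[of y] by (simp add: B_def inner_diff_right power2_norm_eq_inner)
  have ne1: "norm e = 1" using e by simp
  have "e \<bullet> B e = 0" using ne1 by (simp add: B_def inner_diff_right \<mu>_def power2_norm_eq_inner[symmetric])
  hence "B e = 0" using psd_zero[OF linB saB psdB] by blast
  hence "M e = \<mu> *\<^sub>R e" by (simp add: B_def)
  then show ?thesis using that ne1 bound \<mu>_def by blast
qed



lemma vec_eq_by_inner:
  fixes a b :: "'a::real_inner"
  assumes "\<And>y. a \<bullet> y = b \<bullet> y" shows "a = b"
proof -
  have "(a - b) \<bullet> (a - b) = 0" using assms[of "a - b"] by (simp add: inner_diff_left)
  thus ?thesis by simp
qed

lemma q_sqrt_eig:
  fixes Q :: "'a::real_inner \<Rightarrow> 'a"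
  assumes lin: "linear Q" and sa: "\<And>x y. Q x \<bullet> y = x \<bullet> Q y"
    and psd: "\<And>y. 0 \<le> y \<bullet> Q y" and mu: "\<mu> \<ge> 0" and eq: "Q (Q e) = (\<mu>^2) *\<^sub>R e"
  shows "Q e = \<mu> *\<^sub>R e"
proof (cases "\<mu> = 0")
  case True
  hence "Q e \<bullet> Q e = 0" using sa[of e "Q e"] eq by (simp add: inner_commute)
  thus ?thesis using True by simp
next
  case False
  hence mp: "\<mu> > 0" using mu by simp
  define z where "z = Q e - \<mu> *\<^sub>R e"
  have "Q z + \<mu> *\<^sub>R z = 0"
    using eq lin by (simp add: z_def linear_diff linear_scale algebra_simps power2_eq_square)
  hence "z \<bullet> (Q z + \<mu> *\<^sub>R z) = 0" by simp
  hence "z \<bullet> Q z + \<mu> * (z \<bullet> z) = 0" by (simp add: inner_add_right)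
  moreover have "z \<bullet> Q z \<ge> 0" using psd by simp
  moreover have "z \<bullet> z \<ge> 0" by simp
  moreover have "\<mu> * (z \<bullet> z) \<ge> 0" using mp by simp
  ultimately have "\<mu> * (z \<bullet> z) = 0" by linarith
  hence "z = 0" using mp by simp
  thus ?thesis by (simp add: z_def)
qed

lemma sqrt_uniq:
  fixes S Q :: "'a::euclidean_space \<Rightarrow> 'a"
  assumes linS: "linear S" and saS: "\<And>x y. S x \<bullet> y = x \<bullet> S y" and psdS: "\<And>y. 0 \<le> y \<bullet> S y"
    and linQ: "linear Q" and saQ: "\<And>x y. Q x \<bullet> y = x \<bullet> Q y" and psdQ: "\<And>y. 0 \<le> y \<bullet> Q y"
    and sq: "\<And>x. S (S x) = Q (Q x)"
  shows "S x = Q x"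
proof -
  define D where "D x = Q x - S x" for x
  have linD: "linear D" unfolding D_def by (rule linearI) (auto simp: linear_add[OF linQ] linear_add[OF linS] linear_scale[OF linQ] linear_scale[OF linS] algebra_simps)
  have saD: "D x \<bullet> y = x \<bullet> D y" for x y using saS[of x y] saQ[of x y] by (simp add: D_def inner_diff_left inner_diff_right)
  have eig0: "\<delta> = 0" if ev: "D x = \<delta> *\<^sub>R x" and x0: "x \<noteq> 0" for x \<delta>
  proof -
    have Qx: "Q x = S x + \<delta> *\<^sub>R x" using ev by (simp add: D_def algebra_simps)
    have QSx: "Q (S x) = S (S x) + D (S x)" by (simp add: D_def)
    have "Q (Q x) = Q (S x) + \<delta> *\<^sub>R Q x" using Qx linQ by (simp add: linear_add linear_scale)
    hence "D (S x) + \<delta> *\<^sub>R S x + (\<delta> * \<delta>) *\<^sub>R x = 0" using sq[of x] QSx Qx by (simp add: algebra_simps)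
    hence "(D (S x) + \<delta> *\<^sub>R S x + (\<delta> * \<delta>) *\<^sub>R x) \<bullet> x = 0" by simp
    moreover have "D (S x) \<bullet> x = \<delta> * (S x \<bullet> x)" using saD[of "S x" x] ev by simp
    ultimately have e1: "2 * \<delta> * (x \<bullet> S x) + \<delta> * \<delta> * (x \<bullet> x) = 0"
      by (simp add: inner_add_left inner_commute algebra_simps)
    have a0: "x \<bullet> S x \<ge> 0" using psdS by simp
    have b0: "x \<bullet> S x + \<delta> * (x \<bullet> x) \<ge> 0" using psdQ[of x] Qx by (simp add: inner_add_right)
    have n0: "x \<bullet> x > 0" using x0 by simp
    show ?thesis
    proof (rule ccontr)
      assume "\<delta> \<noteq> 0"
      have "\<delta> * (2 * (x \<bullet> S x) + \<delta> * (x \<bullet> x)) = 0" using e1 by (simp add: algebra_simps)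
      hence "2 * (x \<bullet> S x) + \<delta> * (x \<bullet> x) = 0" using \<open>\<delta> \<noteq> 0\<close> by simp
      hence "x \<bullet> S x = 0" using a0 b0 by linarith
      hence "\<delta> * (x \<bullet> x) = 0" using \<open>2 * (x \<bullet> S x) + \<delta> * (x \<bullet> x) = 0\<close> by simp
      thus False using \<open>\<delta> \<noteq> 0\<close> n0 by simp
    qed
  qed
  obtain e1 where e1: "norm e1 = 1" "\<And>y. y \<bullet> D y \<le> (e1 \<bullet> D e1) * (norm y)^2" "D e1 = (e1 \<bullet> D e1) *\<^sub>R e1"
    using eig_max[OF linD saD] by blast
  have "e1 \<noteq> 0" using e1(1) by auto
  hence "e1 \<bullet> D e1 = 0" using eig0[OF e1(3)] by blast
  hence up: "y \<bullet> D y \<le> 0" for y using e1(2)[of y] by simp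
  have linN: "linear (\<lambda>x. - D x)" using linD by (rule linear_compose_neg)
  have saN: "(- D x) \<bullet> y = x \<bullet> (- D y)" for x y using saD[of x y] by simp
  obtain e2 where e2: "norm e2 = 1" "\<And>y. y \<bullet> (- D y) \<le> (e2 \<bullet> (- D e2)) * (norm y)^2" "- D e2 = (e2 \<bullet> (- D e2)) *\<^sub>R e2"
    using eig_max[OF linN saN] by blast
  have "D e2 = (- (e2 \<bullet> (- D e2))) *\<^sub>R e2" using e2(3) by (metis minus_minus scaleR_minus_left)
  hence "- (e2 \<bullet> (- D e2)) = 0" using eig0 e2(1) by fastforce
  hence lo: "y \<bullet> D y \<ge> 0" for y using e2(2)[of y] by simp
  have q0: "y \<bullet> D y = 0" for y using up[of y] lo[of y] by simp
  have "D x = 0"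
  proof -
    have "(D x + x) \<bullet> D (D x + x) = 0" using q0 by blast
    moreover have "D (D x + x) = D (D x) + D x" using linD by (simp add: linear_add)
    moreover have "x \<bullet> D (D x) = D x \<bullet> D x" using saD[of x "D x"] by (simp add: inner_commute)
    ultimately have "2 * (D x \<bullet> D x) = 0" using q0[of x] q0[of "D x"]
      by (simp add: inner_add_left inner_add_right inner_commute)
    thus ?thesis by simp
  qed
  thus ?thesis by (simp add: D_def)
qed


lemma key:
  fixes B Q :: "'a::euclidean_space \<Rightarrow> 'a"
  assumes ortB: "orthogonal_transformation B"
    and linQ: "linear Q" and saQ: "\<And>x y. Q x \<bullet> y = x \<bullet> Q y" and psdQ: "\<And>y. 0 \<le> y \<bullet> Q y"
    and hS: "\<And>x y. B (Q x) \<bullet> y = x \<bullet> B (Q y)"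
  shows "(\<forall>x. B (Q x) = Q x) \<or> (\<exists>e \<mu>. norm e = 1 \<and> \<mu> > 0 \<and> B e = - e \<and> Q e = \<mu> *\<^sub>R e)"
proof -
  have linB: "linear B" and ipB: "\<And>v w. B v \<bullet> B w = v \<bullet> w" using ortB by (auto simp: orthogonal_transformation_def)
  define S where "S x = B (Q x)" for x
  have "S = B \<circ> Q" by (rule ext) (simp add: S_def)
  hence linS: "linear S" using linear_compose[OF linQ linB] by simp
  have saS: "S x \<bullet> y = x \<bullet> S y" for x y unfolding S_def by (rule hS)
  have sq: "S (S x) = Q (Q x)" for x
  proof (rule vec_eq_by_inner)
    fix y
    have "S (S x) \<bullet> y = S x \<bullet> S y" using saS[of "S x" y] by simp
    also have "\<dots> = Q x \<bullet> Q y" by (simp add: S_def ipB)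
    also have "\<dots> = Q (Q x) \<bullet> y" using saQ[of "Q x" y] by simp
    finally show "S (S x) \<bullet> y = Q (Q x) \<bullet> y" .
  qed
  show ?thesis
  proof (cases "\<forall>y. 0 \<le> y \<bullet> S y")
    case True
    have psdS: "\<And>y. 0 \<le> y \<bullet> S y" using True by blast
    have "S x = Q x" for x by (rule sqrt_uniq[OF linS saS psdS linQ saQ psdQ sq])
    thus ?thesis by (simp add: S_def)
  next
    case False
    then obtain y0 where y0: "y0 \<bullet> S y0 < 0" by (meson not_le)
    have linN: "linear (\<lambda>x. - S x)" using linS by (rule linear_compose_neg)
    have saN: "(- S x) \<bullet> y = x \<bullet> (- S y)" for x y using saS[of x y] by simp
    obtain e where e: "norm e = 1" "\<And>y. y \<bullet> (- S y) \<le> (e \<bullet> (- S e)) * (norm y)^2" "- S e = (e \<bullet> (- S e)) *\<^sub>R e"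
      using eig_max[OF linN saN] by metis
    define \<nu> where "\<nu> = e \<bullet> (- S e)"
    have "0 < y0 \<bullet> (- S y0)" using y0 by simp
    also have "\<dots> \<le> \<nu> * (norm y0)^2" using e(2)[of y0] unfolding \<nu>_def .
    finally have "0 < \<nu> * (norm y0)^2" .
    hence nupos: "\<nu> > 0" by (simp add: zero_less_mult_iff)
    have e3: "- S e = \<nu> *\<^sub>R e" using e(3) unfolding \<nu>_def .
    have Se: "S e = (- \<nu>) *\<^sub>R e" using arg_cong[OF e3, of uminus] by simp
    have "S (S e) = S ((- \<nu>) *\<^sub>R e)" by (simp only: Se)
    also have "\<dots> = (- \<nu>) *\<^sub>R S e" by (rule linear_scale[OF linS])
    also have "\<dots> = (\<nu>^2) *\<^sub>R e" by (simp add: Se power2_eq_square)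
    finally have QQ: "Q (Q e) = (\<nu>^2) *\<^sub>R e" using sq[of e] by simp
    have Qe: "Q e = \<nu> *\<^sub>R e" using q_sqrt_eig[OF linQ saQ psdQ _ QQ] nupos by simp
    have BQe: "B (Q e) = \<nu> *\<^sub>R B e" using Qe linear_scale[OF linB] by simp
    have "S e = B (Q e)" by (simp add: S_def)
    hence "\<nu> *\<^sub>R B e = \<nu> *\<^sub>R (- e)" using Se BQe by simp
    hence "B e = - e" using nupos scaleR_cancel_left[of \<nu> "B e" "- e"] by (metis less_irrefl)
    thus ?thesis using e(1) nupos Qe by blast
  qed
qed



lemma trace_fix:
  fixes B :: "'a::euclidean_space \<Rightarrow> 'a" and v :: "'n::finite \<Rightarrow> 'a"
  assumes ortB: "orthogonal_transformation B" and mpos: "\<And>j. m j > 0"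
    and hfix: "\<And>x. B (\<Sum>j\<in>UNIV. (m j * (v j \<bullet> x)) *\<^sub>R v j) = (\<Sum>j\<in>UNIV. (m j * (v j \<bullet> x)) *\<^sub>R v j)"
  shows "B (v j) = v j"
proof -
  have linB: "linear B" and ipB: "\<And>v w. B v \<bullet> B w = v \<bullet> w" using ortB by (auto simp: orthogonal_transformation_def)
  have BQ: "B (\<Sum>j\<in>UNIV. (m j * (v j \<bullet> x)) *\<^sub>R v j) = (\<Sum>j\<in>UNIV. (m j * (v j \<bullet> x)) *\<^sub>R B (v j))" for x
    using linB by (simp add: linear_sum linear_scale)
  have "(\<Sum>b\<in>Basis. b \<bullet> (\<Sum>j\<in>UNIV. (m j * (v j \<bullet> b)) *\<^sub>R B (v j)))
      = (\<Sum>b\<in>Basis. b \<bullet> (\<Sum>j\<in>UNIV. (m j * (v j \<bullet> b)) *\<^sub>R v j))"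
    using hfix BQ by simp
  hence "(\<Sum>b\<in>Basis. \<Sum>j\<in>UNIV. m j * ((v j \<bullet> b) * (B (v j) \<bullet> b)))
      = (\<Sum>b\<in>Basis. \<Sum>j\<in>UNIV. m j * ((v j \<bullet> b) * (v j \<bullet> b)))"
    by (simp add: inner_sum_right inner_commute mult.assoc mult.left_commute)
  hence "(\<Sum>j\<in>UNIV. m j * (\<Sum>b\<in>Basis. (v j \<bullet> b) * (B (v j) \<bullet> b)))
      = (\<Sum>j\<in>UNIV. m j * (\<Sum>b\<in>Basis. (v j \<bullet> b) * (v j \<bullet> b)))"
    by (simp add: sum_distrib_left sum.swap[of _ Basis])
  hence "(\<Sum>j\<in>UNIV. m j * (v j \<bullet> B (v j))) = (\<Sum>j\<in>UNIV. m j * (v j \<bullet> v j))"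
    by (simp add: euclidean_inner[symmetric])
  hence s0: "(\<Sum>j\<in>UNIV. m j * (v j \<bullet> v j - v j \<bullet> B (v j))) = 0"
    by (simp add: right_diff_distrib sum_subtractf)
  have cs: "v k \<bullet> B (v k) \<le> v k \<bullet> v k" for k
  proof -
    have "v k \<bullet> B (v k) \<le> norm (v k) * norm (B (v k))" by (rule norm_cauchy_schwarz)
    also have "norm (B (v k)) = norm (v k)" using ortB by (simp add: orthogonal_transformation_norm)
    finally show ?thesis by (simp add: power2_eq_square[symmetric] power2_norm_eq_inner)
  qed
  have nn: "\<And>k. k\<in>UNIV \<Longrightarrow> 0 \<le> m k * (v k \<bullet> v k - v k \<bullet> B (v k))"
    using cs mpos by (simp add: less_imp_le)
  have "m j * (v j \<bullet> v j - v j \<bullet> B (v j)) = 0"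
  proof -
    have "sum (\<lambda>k. m k * (v k \<bullet> v k - v k \<bullet> B (v k))) UNIV = 0" using s0 .
    hence "\<forall>k\<in>UNIV. m k * (v k \<bullet> v k - v k \<bullet> B (v k)) = 0"
      by (subst (asm) sum_nonneg_eq_0_iff[OF finite nn]) auto
    thus ?thesis by simp
  qed
  hence eqj: "v j \<bullet> B (v j) = v j \<bullet> v j" using mpos[of j] by simp
  have "(B (v j) - v j) \<bullet> (B (v j) - v j) = 0"
    using eqj ipB[of "v j" "v j"] by (simp add: inner_diff_left inner_diff_right inner_commute)
  thus ?thesis by simp
qed





lemma inner_mat_transpose:
  fixes A :: "real^'n^'n"
  shows "(A *v x) \<bullet> y = x \<bullet> (transpose A *v y)"
  by (metis dot_lmul_matrix inner_commute transpose_matrix_vector)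

lemma reflection_det:
  fixes A :: "real^'d^'d" and e :: "real^'d"
  assumes oA: "orthogonal_matrix A" and dA: "det A = 1" and ne: "norm e = 1"
    and refl: "\<And>x. A *v x = x - (2 * (e \<bullet> x)) *\<^sub>R e"
  shows False
proof -
  obtain k :: 'd where True by simp
  obtain P where oP: "orthogonal_matrix P" and Pk: "P *v (axis k 1) = e"
    using orthogonal_matrix_exists_basis[OF ne] by metis
  have PtP: "transpose P ** P = mat 1" using oP by (simp add: orthogonal_matrix_def)
  have Pte: "transpose P *v e = axis k 1"
    using Pk PtP by (metis matrix_vector_mul_assoc matrix_vector_mul_lid)
  have Pte': "e v* P = axis k 1" using Pte by simp
  define A' where "A' = transpose P ** A ** P"
  define M :: "real^'d^'d" where "M = (\<chi> i. if i = k then (-1) *s (mat 1 $ i) else mat 1 $ i)"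
  have "A' *v x = M *v x" for x
  proof -
    have "A' *v x = transpose P *v (A *v (P *v x))"
      by (simp add: A'_def matrix_vector_mul_assoc matrix_mul_assoc)
    also have "\<dots> = transpose P *v (P *v x) - (2 * (e \<bullet> (P *v x))) *\<^sub>R (transpose P *v e)"
      by (simp add: refl matrix_vector_mult_diff_distrib matrix_vector_mult_scaleR)
    also have "transpose P *v (P *v x) = x" using PtP by (simp add: matrix_vector_mul_assoc)
    also have "e \<bullet> (P *v x) = x $ k"
    proof -
      have "e \<bullet> (P *v x) = (transpose P *v e) \<bullet> x"
        using inner_mat_transpose[of "transpose P" e "x"] by (simp add: inner_commute)
      also have "\<dots> = x $ k" using Pte by (simp add: inner_axis')
      finally show ?thesis .
    qed
    finally have 1: "A' *v x = x - (2 * x $ k) *\<^sub>R axis k 1" by (simp add: Pte')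
    have 2: "M *v x = x - (2 * x $ k) *\<^sub>R axis k 1"
      by (auto simp: vec_eq_iff M_def matrix_vector_mult_def mat_def axis_def mult_delta_left sum_negf)
    show ?thesis using 1 2 by simp
  qed
  hence "A' = M" by (simp add: matrix_eq)
  moreover have "det M = -1"
  proof -
    have "det M = -1 * det ((\<chi> i. if i = k then mat 1 $ i else mat 1 $ i) :: real^'d^'d)"
      unfolding M_def by (rule det_row_mul)
    thus ?thesis by simp
  qed
  moreover have "det A' = det A * (det P * det P)"
    by (simp add: A'_def det_mul)
  moreover have "det P * det P = 1"
    using det_orthogonal_matrix[OF oP] by auto
  ultimately show False using dA by simp
qed

lemma orth_proj2_plane:
  fixes e f :: "real^'d"
  assumes ne: "norm e = 1" and nf: "norm f = 1" and ef: "e \<bullet> f = 0"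
  shows "orth_proj2 (\<lambda>x. (e \<bullet> x) *\<^sub>R e + (f \<bullet> x) *\<^sub>R f)"
proof -
  define p where "p = (\<lambda>x. (e \<bullet> x) *\<^sub>R e + (f \<bullet> x) *\<^sub>R f)"
  have ee: "e \<bullet> e = 1" and ff: "f \<bullet> f = 1" using ne nf by (simp_all add: norm_eq_1)
  have fe: "f \<bullet> e = 0" using ef by (simp add: inner_commute)
  have lin: "linear p" unfolding p_def
    by (rule linearI) (auto simp: inner_add_right algebra_simps scaleR_add_left)
  have idem: "p (p x) = p x" for x
    by (simp add: p_def inner_add_right ee ff ef fe)
  have sa: "p x \<bullet> y = x \<bullet> p y" for x y
    by (simp add: p_def inner_add_left inner_add_right inner_commute)
  have pe: "p e = e" and pf: "p f = f" by (simp_all add: p_def ee ff ef fe)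
  have "range p = span {e, f}"
  proof
    show "range p \<subseteq> span {e, f}"
    proof
      fix y assume "y \<in> range p"
      then obtain x where "y = p x" by blast
      moreover have "p x \<in> span {e, f}" unfolding p_def
        by (intro span_add span_scale span_base) auto
      ultimately show "y \<in> span {e, f}" by simp
    qed
    show "span {e, f} \<subseteq> range p"
    proof (rule span_minimal)
      show "{e, f} \<subseteq> range p" using pe pf by (metis empty_subsetI insert_subset rangeI)
      show "subspace (range p)" using linear_subspace_image[OF lin subspace_UNIV] by simp
    qed
  qed
  moreover have "independent {e, f}"
  proof (rule pairwise_orthogonal_independent)
    show "pairwise orthogonal {e, f}" using ef fe by (auto simp: pairwise_def orthogonal_def)
    show "0 \<notin> {e, f}" using ne nf by auto
  qed
  moreover have "e \<noteq> f" using ee ef by auto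
  moreover have "dim (span {e, f}) = card {e, f}" by (rule dim_span_eq_card_independent) fact
  ultimately have "dim (range p) = 2" by simp
  thus ?thesis using lin idem sa unfolding orth_proj2_def p_def by blast
qed




lemma orth_A:
  fixes A :: "real^'d^'d"
  assumes "orthogonal_matrix A"
  shows "orthogonal_transformation (\<lambda>x. A *v x)"
  using assms by (simp add: orthogonal_transformation_matrix)

lemma plane_inner:
  fixes e f a b :: "real^'d"
  assumes "norm e = 1" "norm f = 1" "e \<bullet> f = 0"
  shows "((e \<bullet> a) *\<^sub>R e + (f \<bullet> a) *\<^sub>R f) \<bullet> ((e \<bullet> b) *\<^sub>R e + (f \<bullet> b) *\<^sub>R f)
         = (e \<bullet> a) * (e \<bullet> b) + (f \<bullet> a) * (f \<bullet> b)"
proof -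
  have ee: "e \<bullet> e = 1" and ff: "f \<bullet> f = 1" using assms by (simp_all add: norm_eq_1)
  have fe: "f \<bullet> e = 0" using assms(3) by (simp add: inner_commute)
  show ?thesis by (simp add: inner_add_left inner_add_right ee ff fe assms(3))
qed

lemma rigid:
  fixes A :: "real^'d^'d" and v :: "'n::finite \<Rightarrow> real^'d" and m :: "'n \<Rightarrow> real"
  assumes oA: "orthogonal_matrix A" and dA: "det A = 1" and mpos: "\<And>j. m j > 0"
    and sym: "\<And>x y. (\<Sum>j\<in>UNIV. m j * (v j \<bullet> x) * ((A *v v j) \<bullet> y))
                   = (\<Sum>j\<in>UNIV. m j * (v j \<bullet> y) * ((A *v v j) \<bullet> x))"
    and noplane: "\<And>e f. norm e = 1 \<Longrightarrow> norm f = 1 \<Longrightarrow> e \<bullet> f = 0 \<Longrightarrow>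
        (\<exists>i. (e \<bullet> v i) *\<^sub>R e + (f \<bullet> v i) *\<^sub>R f \<noteq> 0) \<Longrightarrow>
        (\<exists>j. 0 \<le> ((e \<bullet> (A *v v j)) *\<^sub>R e + (f \<bullet> (A *v v j)) *\<^sub>R f) \<bullet> ((e \<bullet> v j) *\<^sub>R e + (f \<bullet> v j) *\<^sub>R f)
              \<and> (e \<bullet> v j) *\<^sub>R e + (f \<bullet> v j) *\<^sub>R f \<noteq> 0)"
  shows "A *v v j = v j"
proof -
  define B where "B = (\<lambda>x. A *v x)"
  have ortB: "orthogonal_transformation B" unfolding B_def by (rule orth_A[OF oA])
  have linB: "linear B" and ipB: "\<And>x y. B x \<bullet> B y = x \<bullet> y"
    using ortB by (auto simp: orthogonal_transformation_def)
  define Q where "Q x = (\<Sum>j\<in>UNIV. (m j * (v j \<bullet> x)) *\<^sub>R v j)" for x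
  have Qin: "Q x \<bullet> y = (\<Sum>j\<in>UNIV. m j * (v j \<bullet> x) * (v j \<bullet> y))" for x y
    by (simp add: Q_def inner_sum_left)
  have linQ: "linear Q" unfolding Q_def
    by (rule linearI) (auto simp: inner_add_right scaleR_add_left sum.distrib scaleR_sum_right algebra_simps)
  have saQ: "Q x \<bullet> y = x \<bullet> Q y" for x y
    by (simp add: Qin inner_commute[of x] mult.commute mult.left_commute)
  have psdQ: "0 \<le> y \<bullet> Q y" for y
  proof -
    have "0 \<le> (\<Sum>j\<in>UNIV. m j * ((v j \<bullet> y) * (v j \<bullet> y)))"
      by (intro sum_nonneg) (metis mpos less_imp_le mult_nonneg_nonneg zero_le_square)
    thus ?thesis by (simp add: inner_commute[of y] Qin mult.assoc)
  qed
  have BQ: "B (Q x) = (\<Sum>j\<in>UNIV. (m j * (v j \<bullet> x)) *\<^sub>R B (v j))" for x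
    using linB by (simp add: Q_def linear_sum linear_scale)
  have BQin: "B (Q x) \<bullet> y = (\<Sum>j\<in>UNIV. m j * (v j \<bullet> x) * ((A *v v j) \<bullet> y))" for x y
    unfolding BQ by (simp add: inner_sum_left B_def)
  have hS: "B (Q x) \<bullet> y = x \<bullet> B (Q y)" for x y
    using sym[of x y] by (simp add: BQin inner_commute[of x])
  have plane: False
    if ne: "norm e = 1" and nf: "norm f = 1" and ef: "e \<bullet> f = 0"
      and ei: "e \<bullet> v i \<noteq> 0"
      and eA: "\<And>j. e \<bullet> (A *v v j) = - (e \<bullet> v j)"
      and fA: "\<And>j. (f \<bullet> (A *v v j)) * (f \<bullet> v j) \<le> - ((f \<bullet> v j) * (f \<bullet> v j))"
    for e f i
  proof -
    have ee: "e \<bullet> e = 1" using ne by (simp add: norm_eq_1)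
    have fe: "f \<bullet> e = 0" using ef by (simp add: inner_commute)
    have "e \<bullet> ((e \<bullet> v i) *\<^sub>R e + (f \<bullet> v i) *\<^sub>R f) = e \<bullet> v i"
      by (simp add: inner_add_right ee ef)
    hence "(e \<bullet> v i) *\<^sub>R e + (f \<bullet> v i) *\<^sub>R f \<noteq> 0" using ei by auto
    then obtain j where j: "0 \<le> ((e \<bullet> (A *v v j)) *\<^sub>R e + (f \<bullet> (A *v v j)) *\<^sub>R f) \<bullet> ((e \<bullet> v j) *\<^sub>R e + (f \<bullet> v j) *\<^sub>R f)"
        and jn: "(e \<bullet> v j) *\<^sub>R e + (f \<bullet> v j) *\<^sub>R f \<noteq> 0"
      using noplane[OF ne nf ef] by blast
    have "0 \<le> (e \<bullet> (A *v v j)) * (e \<bullet> v j) + (f \<bullet> (A *v v j)) * (f \<bullet> v j)"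
      using j plane_inner[OF ne nf ef] by simp
    hence "0 \<le> - ((e \<bullet> v j) * (e \<bullet> v j)) - ((f \<bullet> v j) * (f \<bullet> v j))" using eA[of j] fA[of j] by simp
    hence "(e \<bullet> v j) * (e \<bullet> v j) = 0" "(f \<bullet> v j) * (f \<bullet> v j) = 0"
      using zero_le_square[of "e \<bullet> v j"] zero_le_square[of "f \<bullet> v j"] by linarith+
    hence "e \<bullet> v j = 0" "f \<bullet> v j = 0" by simp_all
    thus False using jn by simp
  qed
  have eA_gen: "e \<bullet> (A *v y) = - (e \<bullet> y)" if "A *v e = - e" for e y
  proof -
    have "e \<bullet> (A *v y) = - ((A *v e) \<bullet> (A *v y))" using that by simp
    also have "\<dots> = - (e \<bullet> y)" using ipB by (simp add: B_def)
    finally show ?thesis .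
  qed
  from key[OF ortB linQ saQ psdQ hS]
  show ?thesis
  proof
    assume H: "\<forall>x. B (Q x) = Q x"
    have "B (v j) = v j" by (rule trace_fix[where m=m, OF ortB mpos]) (use H in \<open>simp add: Q_def\<close>)
    thus ?thesis by (simp add: B_def)
  next
    assume "\<exists>e \<mu>. norm e = 1 \<and> \<mu> > 0 \<and> B e = - e \<and> Q e = \<mu> *\<^sub>R e"
    then obtain e \<mu> where ne: "norm e = 1" and mu: "\<mu> > 0" and Be: "A *v e = - e" and Qe: "Q e = \<mu> *\<^sub>R e"
      by (auto simp: B_def)
    have ee: "e \<bullet> e = 1" using ne by (simp add: norm_eq_1)
    have eA: "e \<bullet> (A *v y) = - (e \<bullet> y)" for y using eA_gen[OF Be] .
    have ei: "\<exists>i. e \<bullet> v i \<noteq> 0"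
    proof (rule ccontr)
      assume "\<not> ?thesis"
      hence "Q e = 0" by (simp add: Q_def inner_commute)
      thus False using Qe mu ne by auto
    qed
    then obtain i where ei: "e \<bullet> v i \<noteq> 0" by blast
    define R where "R x = x - (2 * (e \<bullet> x)) *\<^sub>R e" for x
    have RR: "R (R x) = x" for x by (simp add: R_def inner_diff_right ee algebra_simps)
    have linR: "linear R" unfolding R_def
      by (rule linearI) (auto simp: inner_add_right algebra_simps scaleR_add_left)
    have ipR: "R x \<bullet> R y = x \<bullet> y" for x y
      by (simp add: R_def inner_diff_left inner_diff_right ee inner_commute algebra_simps)
    define B1 where "B1 x = A *v R x" for x
    have ortB1: "orthogonal_transformation B1"
      unfolding orthogonal_transformation_def
    proof
      have "B1 = (\<lambda>x. A *v x) \<circ> R" by (rule ext) (simp add: B1_def)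
      thus "linear B1" using linear_compose[OF linR matrix_vector_mul_linear] by simp
      show "\<forall>x y. B1 x \<bullet> B1 y = x \<bullet> y" using ipB ipR by (simp add: B1_def B_def)
    qed
    have eQ: "e \<bullet> Q x = \<mu> * (e \<bullet> x)" for x using saQ[of e x] Qe by simp
    have B1Q: "B1 (Q x) = B (Q x) + (2 * \<mu> * (e \<bullet> x)) *\<^sub>R e" for x
      by (simp add: B1_def R_def B_def matrix_vector_mult_diff_distrib matrix_vector_mult_scaleR Be eQ)
    have hS1: "B1 (Q x) \<bullet> y = x \<bullet> B1 (Q y)" for x y
      using hS[of x y] by (simp add: B1Q inner_add_left inner_add_right inner_commute)
    have Re: "R e = - e" by (simp add: R_def ee scaleR_2)
    have B1e: "B1 e = e"
      using Be linear_neg[OF matrix_vector_mul_linear, of A e] by (simp add: B1_def Re)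
    from key[OF ortB1 linQ saQ psdQ hS1]
    show ?thesis
    proof
      assume fixall: "\<forall>x. B1 (Q x) = Q x"
      have B1v: "B1 (v k) = v k" for k by (rule trace_fix[where m=m, OF ortB1 mpos]) (use fixall in \<open>simp add: Q_def\<close>)
      have Av: "A *v v k = v k - (2 * (e \<bullet> v k)) *\<^sub>R e" for k
      proof -
        have "A *v v k = B1 (R (v k))" by (simp add: B1_def RR)
        also have "\<dots> = B1 (v k) - (2 * (e \<bullet> v k)) *\<^sub>R B1 e"
          using linR ortB1 by (simp add: R_def orthogonal_transformation_def linear_diff linear_scale)
        finally show ?thesis by (simp add: B1v B1e)
      qed
      show ?thesis
      proof (cases "span (insert e (range v)) = UNIV")
        case True
        have linB1: "linear B1" using ortB1 by (simp add: orthogonal_transformation_def)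
        have "B1 x = x" for x
        proof (rule linear_eq_on_span[of B1 "\<lambda>x. x" "insert e (range v)" x])
          show "linear B1" by (rule linB1)
          show "linear (\<lambda>x. x)" by (rule linear_ident)
          show "x \<in> span (insert e (range v))" using True by simp
          show "B1 y = y" if "y \<in> insert e (range v)" for y using that B1e B1v by auto
        qed
        hence "A *v x = x - (2 * (e \<bullet> x)) *\<^sub>R e" for x
          using B1_def RR R_def by metis
        hence False using reflection_det[OF oA dA ne] by blast
        thus ?thesis ..
      next
        case False
        have "dim (insert e (range v)) < DIM(real^'d)"
          using False dim_eq_full dim_subset_UNIV le_neq_implies_less by blast
        then obtain f where f0: "f \<noteq> 0" and fo: "\<And>y. y \<in> span (insert e (range v)) \<Longrightarrow> orthogonal f y"
          using orthogonal_to_subspace_exists by blast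
        have fe: "f \<bullet> e = 0" using fo[of e] by (simp add: span_base orthogonal_def)
        have fv: "f \<bullet> v k = 0" for k using fo[of "v k"] by (simp add: span_base orthogonal_def)
        define f' where "f' = (1 / norm f) *\<^sub>R f"
        have nf': "norm f' = 1" using f0 by (simp add: f'_def)
        have ef': "e \<bullet> f' = 0" using fe by (simp add: f'_def inner_commute)
        have f'v: "f' \<bullet> v k = 0" for k using fv by (simp add: f'_def)
        show ?thesis
          by (rule FalseE, rule plane[OF ne nf' ef' ei eA]) (simp add: f'v)
      qed
    next
      assume "\<exists>e \<mu>. norm e = 1 \<and> \<mu> > 0 \<and> B1 e = - e \<and> Q e = \<mu> *\<^sub>R e"
      then obtain e' \<mu>' where ne': "norm e' = 1" and mu': "\<mu>' > 0" and B1e': "B1 e' = - e'" and Qe': "Q e' = \<mu>' *\<^sub>R e'"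
        by blast
      have "B1 (Q e) \<bullet> e' = e \<bullet> B1 (Q e')" by (rule hS1)
      moreover have "B1 (Q e) = \<mu> *\<^sub>R e"
        using Qe B1e linear_scale[OF ortB1[unfolded orthogonal_transformation_def, THEN conjunct1]] by simp
      moreover have "B1 (Q e') = - (\<mu>' *\<^sub>R e')"
        using Qe' B1e' linear_scale[OF ortB1[unfolded orthogonal_transformation_def, THEN conjunct1]] by simp
      ultimately have "(\<mu> + \<mu>') * (e \<bullet> e') = 0" by (simp add: algebra_simps)
      hence ee': "e \<bullet> e' = 0" using mu mu' by simp
      have "A *v e' = B1 e'" by (simp add: B1_def R_def ee')
      hence Ae': "A *v e' = - e'" using B1e' by simp
      have e'A: "e' \<bullet> (A *v y) = - (e' \<bullet> y)" for y using eA_gen[OF Ae'] .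
      show ?thesis
        by (rule FalseE, rule plane[OF ne ne' ee' ei eA]) (simp add: e'A power2_eq_square)
    qed
  qed
qed




lemma egrad_deriv:
  fixes U :: "(real^'d)^'n \<Rightarrow> real"
  assumes sm: "smooth_on Xset U" and qX: "q \<in> Xset"
  shows "(U has_derivative (\<lambda>h. egrad U q \<bullet> h)) (at q)"
proof -
  obtain G :: "((real^'d)^'n) list \<Rightarrow> (real^'d)^'n \<Rightarrow> real" where op: "open (Xset :: ((real^'d)^'n) set)"
    and G0: "\<forall>x\<in>Xset. G [] x = U x"
    and GD: "\<forall>vs. \<forall>x\<in>Xset. (G vs has_derivative (\<lambda>h. G (h # vs) x)) (at x)"
    using sm unfolding smooth_on_def by blast
  define D where "D = (\<lambda>h. G [h] q)"
  have "(G [] has_derivative D) (at q)" using GD qX unfolding D_def by blast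
  hence dU: "(U has_derivative D) (at q)"
    by (rule has_derivative_transform_within_open[OF _ op qX]) (use G0 in auto)
  have lD: "linear D" using has_derivative_bounded_linear[OF dU] bounded_linear.linear by blast
  define g0 where "g0 = (\<Sum>b\<in>Basis. D b *\<^sub>R b)"
  have Dg: "D h = g0 \<bullet> h" for h
  proof -
    have "D h = D (\<Sum>b\<in>Basis. (h \<bullet> b) *\<^sub>R b)" by (simp add: euclidean_representation)
    also have "\<dots> = (\<Sum>b\<in>Basis. (h \<bullet> b) * D b)" using lD by (simp add: linear_sum linear_scale)
    also have "\<dots> = g0 \<bullet> h" by (simp add: g0_def inner_sum_left inner_commute[of h] mult.commute)
    finally show ?thesis .
  qed
  have dg0: "(U has_derivative (\<lambda>h. g0 \<bullet> h)) (at q)"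
    using dU Dg by (metis (no_types, lifting) ext)
  have "egrad U q = g0"
    unfolding egrad_def
  proof (rule the_equality)
    show "(U has_derivative (\<lambda>h. g0 \<bullet> h)) (at q)" by (rule dg0)
    fix g assume "(U has_derivative (\<lambda>h. g \<bullet> h)) (at q)"
    hence "(\<lambda>h. g \<bullet> h) = (\<lambda>h. g0 \<bullet> h)" using has_derivative_unique dg0 by blast
    hence "\<And>y. g \<bullet> y = g0 \<bullet> y" by (metis fun_cong)
    thus "g = g0" by (rule vec_eq_by_inner)
  qed
  thus ?thesis using dg0 by simp
qed

definition rotab :: "'d \<Rightarrow> 'd \<Rightarrow> real \<Rightarrow> real^'d \<Rightarrow> real^'d" where
  "rotab a b t x = (\<chi> k. if k = a then cos t * x$a - sin t * x$b
                          else if k = b then sin t * x$a + cos t * x$b else x$k)"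

lemma sum_two:
  fixes f :: "'d::finite \<Rightarrow> real"
  assumes "a \<noteq> b"
  shows "(\<Sum>k\<in>UNIV. f k) = f a + f b + (\<Sum>k\<in>UNIV - {a, b}. f k)"
proof -
  have "(\<Sum>k\<in>UNIV. f k) = f a + (\<Sum>k\<in>UNIV - {a}. f k)" by (simp add: sum.remove)
  also have "(\<Sum>k\<in>UNIV - {a}. f k) = f b + (\<Sum>k\<in>UNIV - {a} - {b}. f k)"
    using assms by (intro sum.remove) auto
  finally show ?thesis by (simp add: Diff_insert2[symmetric] insert_commute)
qed

lemma rotab_isom:
  fixes a b :: "'d::finite"
  assumes ab: "a \<noteq> b"
  shows "dist (rotab a b t x) (rotab a b t y) = dist x y"
proof -
  define z where "z = x - y"
  have diff: "rotab a b t x - rotab a b t y = rotab a b t z"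
    by (simp add: vec_eq_iff rotab_def z_def algebra_simps)
  have "rotab a b t z \<bullet> rotab a b t z = z \<bullet> z"
  proof -
    have rk: "rotab a b t z $ k = z $ k" if "k \<in> UNIV - {a, b}" for k
      using that by (auto simp: rotab_def)
    have "rotab a b t z \<bullet> rotab a b t z = (\<Sum>k\<in>UNIV. rotab a b t z $ k * rotab a b t z $ k)"
      by (simp add: inner_vec_def)
    also have "\<dots> = rotab a b t z $ a * rotab a b t z $ a + rotab a b t z $ b * rotab a b t z $ b
        + (\<Sum>k\<in>UNIV - {a, b}. rotab a b t z $ k * rotab a b t z $ k)"
      by (rule sum_two[OF ab])
    also have "(\<Sum>k\<in>UNIV - {a, b}. rotab a b t z $ k * rotab a b t z $ k) = (\<Sum>k\<in>UNIV - {a, b}. z $ k * z $ k)"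
      by (rule sum.cong) (auto simp: rk)
    also have "rotab a b t z $ a * rotab a b t z $ a + rotab a b t z $ b * rotab a b t z $ b
        = z $ a * z $ a + z $ b * z $ b"
    proof -
      have s: "cos t * cos t + sin t * sin t = 1" by (rule sin_cos_squared_add3)
      have "rotab a b t z $ a * rotab a b t z $ a + rotab a b t z $ b * rotab a b t z $ b
          = (cos t * cos t + sin t * sin t) * (z $ a * z $ a + z $ b * z $ b)"
        using ab by (simp add: rotab_def algebra_simps del: sin_cos_squared_add3)
      thus ?thesis using s by simp
    qed
    also have "z $ a * z $ a + z $ b * z $ b + (\<Sum>k\<in>UNIV - {a, b}. z $ k * z $ k) = z \<bullet> z"
      using sum_two[OF ab, of "\<lambda>k. z $ k * z $ k"] by (simp add: inner_vec_def)
    finally show ?thesis .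
  qed
  hence "norm (rotab a b t z) = norm z" by (simp add: norm_eq_sqrt_inner)
  thus ?thesis by (simp add: dist_norm diff z_def[symmetric])
qed




lemma rot_grad_sym:
  fixes U :: "(real^'d)^'n \<Rightarrow> real" and a b :: 'd
  assumes sm: "smooth_on Xset U" and qX: "q \<in> Xset"
    and isom: "\<forall>g :: real^'d \<Rightarrow> real^'d. (\<forall>x y. dist (g x) (g y) = dist x y) \<longrightarrow>
                     (\<forall>q\<in>Xset. U (\<chi> j. g (q $ j)) = U q)"
  shows "(\<Sum>j\<in>UNIV. (egrad U q $ j) $ b * (q $ j) $ a) = (\<Sum>j\<in>UNIV. (egrad U q $ j) $ a * (q $ j) $ b)"
proof (cases "a = b")
  case True then show ?thesis by simp
next
  case False
  hence ab: "a \<noteq> b" .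
  define Xi :: "(real^'d)^'n" where "Xi = (\<chi> j. \<chi> k. if k = a then - (q$j)$b else if k = b then (q$j)$a else 0)"
  define P :: "(real^'d)^'n" where "P = (\<chi> j. \<chi> k. if k = a then (q$j)$a else if k = b then (q$j)$b else 0)"
  define \<gamma> where "\<gamma> t = q + (cos t - 1) *\<^sub>R P + sin t *\<^sub>R Xi" for t :: real
  have geq: "\<gamma> t = (\<chi> j. rotab a b t (q $ j))" for t
    using ab by (simp add: vec_eq_iff \<gamma>_def P_def Xi_def rotab_def algebra_simps)
  have const: "U (\<gamma> t) = U q" for t
  proof -
    have "\<forall>x y. dist (rotab a b t x) (rotab a b t y) = dist x y" using rotab_isom[OF ab] by blast
    hence "U (\<chi> j. rotab a b t (q $ j)) = U q" using isom qX by blast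
    thus ?thesis by (simp add: geq)
  qed
  have g0: "\<gamma> 0 = q" by (simp add: \<gamma>_def)
  have dg: "(\<gamma> has_vector_derivative (0 + (- sin 0) *\<^sub>R P + cos 0 *\<^sub>R Xi)) (at 0)"
    unfolding \<gamma>_def[abs_def]
    by (intro derivative_eq_intros) auto
  hence dg': "(\<gamma> has_derivative (\<lambda>s. s *\<^sub>R Xi)) (at 0)"
    by (simp add: has_vector_derivative_def)
  have dU: "(U has_derivative (\<lambda>h. egrad U q \<bullet> h)) (at (\<gamma> 0))"
    using egrad_deriv[OF sm qX] g0 by simp
  have "((U \<circ> \<gamma>) has_derivative ((\<lambda>h. egrad U q \<bullet> h) \<circ> (\<lambda>s. s *\<^sub>R Xi))) (at 0)"
    by (rule diff_chain_at[OF dg' dU])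
  moreover have "U \<circ> \<gamma> = (\<lambda>t. U q)" using const by (simp add: fun_eq_iff)
  ultimately have "((\<lambda>t. U q) has_derivative ((\<lambda>h. egrad U q \<bullet> h) \<circ> (\<lambda>s. s *\<^sub>R Xi))) (at 0)" by simp
  moreover have "((\<lambda>t. U q) has_derivative (\<lambda>s. 0)) (at (0::real))" by (rule has_derivative_const)
  ultimately have "((\<lambda>h. egrad U q \<bullet> h) \<circ> (\<lambda>s. s *\<^sub>R Xi)) = (\<lambda>s. 0)" by (rule has_derivative_unique)
  hence z: "egrad U q \<bullet> Xi = 0" by (metis (mono_tags) comp_apply scaleR_one)
  have inner_j: "(egrad U q $ j) \<bullet> (Xi $ j) = (egrad U q $ j) $ b * (q $ j) $ a - (egrad U q $ j) $ a * (q $ j) $ b" for j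
  proof -
    have "(egrad U q $ j) \<bullet> (Xi $ j) = (\<Sum>k\<in>UNIV. (egrad U q $ j) $ k * (Xi $ j) $ k)"
      by (simp add: inner_vec_def)
    also have "\<dots> = (egrad U q $ j) $ a * (Xi $ j) $ a + (egrad U q $ j) $ b * (Xi $ j) $ b
        + (\<Sum>k\<in>UNIV - {a, b}. (egrad U q $ j) $ k * (Xi $ j) $ k)"
      by (rule sum_two[OF ab])
    also have "(\<Sum>k\<in>UNIV - {a, b}. (egrad U q $ j) $ k * (Xi $ j) $ k) = 0"
      by (rule sum.neutral) (auto simp: Xi_def)
    finally show ?thesis using ab by (simp add: Xi_def)
  qed
  have "egrad U q \<bullet> Xi = (\<Sum>j\<in>UNIV. (egrad U q $ j) \<bullet> (Xi $ j))" by (simp add: inner_vec_def)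
  also have "\<dots> = (\<Sum>j\<in>UNIV. (egrad U q $ j) $ b * (q $ j) $ a) - (\<Sum>j\<in>UNIV. (egrad U q $ j) $ a * (q $ j) $ b)"
    by (simp add: inner_j sum_subtractf)
  finally show ?thesis using z by simp
qed




lemma bilin_expand:
  fixes v w :: "'n::finite \<Rightarrow> real^'d" and m :: "'n \<Rightarrow> real"
  shows "(\<Sum>j\<in>UNIV. m j * (v j \<bullet> x) * (w j \<bullet> y))
       = (\<Sum>a\<in>UNIV. \<Sum>b\<in>UNIV. x $ a * y $ b * (\<Sum>j\<in>UNIV. m j * (v j $ a) * (w j $ b)))"
proof -
  have "(\<Sum>j\<in>UNIV. m j * (v j \<bullet> x) * (w j \<bullet> y))
      = (\<Sum>j\<in>UNIV. \<Sum>a\<in>UNIV. \<Sum>b\<in>UNIV. x $ a * y $ b * (m j * (v j $ a) * (w j $ b)))"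
    by (simp add: inner_vec_def sum_distrib_left sum_distrib_right mult_ac)
  also have "\<dots> = (\<Sum>a\<in>UNIV. \<Sum>j\<in>UNIV. \<Sum>b\<in>UNIV. x $ a * y $ b * (m j * (v j $ a) * (w j $ b)))"
    by (rule sum.swap)
  also have "\<dots> = (\<Sum>a\<in>UNIV. \<Sum>b\<in>UNIV. \<Sum>j\<in>UNIV. x $ a * y $ b * (m j * (v j $ a) * (w j $ b)))"
    by (rule sum.cong[OF refl], rule sum.swap)
  also have "\<dots> = (\<Sum>a\<in>UNIV. \<Sum>b\<in>UNIV. x $ a * y $ b * (\<Sum>j\<in>UNIV. m j * (v j $ a) * (w j $ b)))"
    by (simp add: sum_distrib_left)
  finally show ?thesis .
qed

lemma bilin_sym:
  fixes v w :: "'n::finite \<Rightarrow> real^'d" and m :: "'n \<Rightarrow> real"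
  assumes H: "\<And>a b. (\<Sum>j\<in>UNIV. m j * (w j $ b) * (v j $ a)) = (\<Sum>j\<in>UNIV. m j * (w j $ a) * (v j $ b))"
  shows "(\<Sum>j\<in>UNIV. m j * (v j \<bullet> x) * (w j \<bullet> y)) = (\<Sum>j\<in>UNIV. m j * (v j \<bullet> y) * (w j \<bullet> x))"
proof -
  define C where "C a b = (\<Sum>j\<in>UNIV. m j * (v j $ a) * (w j $ b))" for a b
  have Cs: "C a b = C b a" for a b using H[of a b] by (simp add: C_def mult_ac)
  have "(\<Sum>j\<in>UNIV. m j * (v j \<bullet> y) * (w j \<bullet> x)) = (\<Sum>a\<in>UNIV. \<Sum>b\<in>UNIV. y $ a * x $ b * C a b)"
    by (simp add: bilin_expand C_def)
  also have "\<dots> = (\<Sum>b\<in>UNIV. \<Sum>a\<in>UNIV. y $ a * x $ b * C a b)" by (rule sum.swap)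
  also have "\<dots> = (\<Sum>b\<in>UNIV. \<Sum>a\<in>UNIV. x $ b * y $ a * C b a)" by (simp add: Cs mult_ac)
  also have "\<dots> = (\<Sum>j\<in>UNIV. m j * (v j \<bullet> x) * (w j \<bullet> y))"
    by (simp add: bilin_expand C_def)
  finally show ?thesis by simp
qed




theorem mainTheorem5:
  fixes m :: "'n::finite \<Rightarrow> real"
    and U :: "(real^'d)^'n \<Rightarrow> real"
    and \<alpha> :: real
  assumes n2: "CARD('n) \<ge> 2"
    and mpos: "\<forall>j. m j > 0"
    and alpha_pos: "\<alpha> > 0"
    and smooth: "smooth_on Xset U"
    and homog: "\<forall>q\<in>Xset. \<forall>t::real. t > 0 \<longrightarrow> U (t *\<^sub>R q) = t powr (- \<alpha>) * U q"
    and isom_inv: "\<forall>g :: real^'d \<Rightarrow> real^'d. (\<forall>x y. dist (g x) (g y) = dist x y) \<longrightarrow>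
                     (\<forall>q\<in>Xset. U (\<chi> j. g (q $ j)) = U q)"
    and Upos: "\<forall>q\<in>Xset. U q > 0"
    and Fcond: "\<forall>p. orth_proj2 p \<longrightarrow> (\<forall>q\<in>Sset m.
                  (\<exists>j. p (Fmap m U q $ j) \<bullet> p (q $ j) \<ge> 0) \<and>
                  ((\<exists>i. p (q $ i) \<noteq> 0) \<longrightarrow>
                     (\<exists>j. p (Fmap m U q $ j) \<bullet> p (q $ j) \<ge> 0 \<and> p (q $ j) \<noteq> 0)))"
  shows "orbit_SO ` {q \<in> Sset m. Fmap m U q = q}
         = {orbit_SO q | q. q \<in> Sset m \<and> orbit_SO (Fmap m U q) = orbit_SO q}"
proof
  show "orbit_SO ` {q \<in> Sset m. Fmap m U q = q}
         \<subseteq> {orbit_SO q | q. q \<in> Sset m \<and> orbit_SO (Fmap m U q) = orbit_SO q}" by auto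
next
  show "{orbit_SO q | q. q \<in> Sset m \<and> orbit_SO (Fmap m U q) = orbit_SO q}
        \<subseteq> orbit_SO ` {q \<in> Sset m. Fmap m U q = q}"
  proof
    fix Z assume "Z \<in> {orbit_SO q | q. q \<in> Sset m \<and> orbit_SO (Fmap m U q) = orbit_SO q}"
    then obtain q where qS: "q \<in> Sset m" and orb: "orbit_SO (Fmap m U q) = orbit_SO q"
      and Zq: "Z = orbit_SO q" by blast
    have mp: "\<And>j. m j > 0" using mpos by blast
    have idSO: "mat 1 \<in> SOd" by (simp add: SOd_def orthogonal_matrix_id)
    have "act (mat 1) (Fmap m U q) = Fmap m U q" by (simp add: act_def vec_eq_iff)
    hence "Fmap m U q \<in> orbit_SO (Fmap m U q)" unfolding orbit_SO_def using idSO by force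
    hence "Fmap m U q \<in> orbit_SO q" using orb by simp
    then obtain A where ASO: "A \<in> SOd" and FA: "Fmap m U q = act A q" by (auto simp: orbit_SO_def)
    have oA: "orthogonal_matrix A" and dA: "det A = 1" using ASO by (auto simp: SOd_def)
    have FAj: "Fmap m U q $ j = A *v (q $ j)" for j by (simp add: FA act_def)
    have qX: "q \<in> Xset" and qn: "norm_M m q = 1" using qS by (auto simp: Sset_def)
    define c where "c = norm_M m (grad_M m U q)"
    have Fdef: "Fmap m U q = - ((1 / c) *\<^sub>R grad_M m U q)" by (simp add: Fmap_def c_def)
    have c0: "c \<noteq> 0"
    proof
      assume "c = 0"
      hence "Fmap m U q = 0" by (simp add: Fdef)
      hence "A *v (q $ j) = 0" for j using FAj by (metis zero_index)
      hence "norm (q $ j) = 0" for j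
        using orthogonal_transformation_norm[OF orth_A[OF oA], of "q $ j"] by simp
      hence "q = 0" by (simp add: vec_eq_iff)
      hence "norm_M m q = 0" by (simp add: norm_M_def inner_M_def)
      thus False using qn by simp
    qed
    have gM: "grad_M m U q = (- c) *\<^sub>R Fmap m U q" using c0 by (simp add: Fdef)
    have egj: "egrad U q $ j = (- c * m j) *\<^sub>R (A *v (q $ j))" for j
    proof -
      have "grad_M m U q $ j = (1 / m j) *\<^sub>R (egrad U q $ j)" by (simp add: grad_M_def)
      hence "egrad U q $ j = m j *\<^sub>R (grad_M m U q $ j)" using mp[of j] by simp
      thus ?thesis using gM FAj by simp
    qed
    have symab: "(\<Sum>j\<in>UNIV. m j * ((A *v (q $ j)) $ b) * ((q $ j) $ a))
               = (\<Sum>j\<in>UNIV. m j * ((A *v (q $ j)) $ a) * ((q $ j) $ b))" for a b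
    proof -
      have "(\<Sum>j\<in>UNIV. (egrad U q $ j) $ b * (q $ j) $ a) = (\<Sum>j\<in>UNIV. (egrad U q $ j) $ a * (q $ j) $ b)"
        by (rule rot_grad_sym[OF smooth qX isom_inv])
      hence "(- c) * (\<Sum>j\<in>UNIV. m j * ((A *v (q $ j)) $ b) * ((q $ j) $ a))
           = (- c) * (\<Sum>j\<in>UNIV. m j * ((A *v (q $ j)) $ a) * ((q $ j) $ b))"
        by (simp add: egj sum_distrib_left mult_ac)
      thus ?thesis using c0 by simp
    qed
    have sym: "(\<Sum>j\<in>UNIV. m j * (q $ j \<bullet> x) * ((A *v (q $ j)) \<bullet> y))
             = (\<Sum>j\<in>UNIV. m j * (q $ j \<bullet> y) * ((A *v (q $ j)) \<bullet> x))" for x y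
      by (rule bilin_sym) (rule symab)
    have noplane: "\<exists>j. 0 \<le> ((e \<bullet> (A *v (q $ j))) *\<^sub>R e + (f \<bullet> (A *v (q $ j))) *\<^sub>R f) \<bullet> ((e \<bullet> q $ j) *\<^sub>R e + (f \<bullet> q $ j) *\<^sub>R f)
              \<and> (e \<bullet> q $ j) *\<^sub>R e + (f \<bullet> q $ j) *\<^sub>R f \<noteq> 0"
      if ne: "norm e = 1" and nf: "norm f = 1" and ef: "e \<bullet> f = 0"
        and ex: "\<exists>i. (e \<bullet> q $ i) *\<^sub>R e + (f \<bullet> q $ i) *\<^sub>R f \<noteq> 0" for e f
    proof -
      have op: "orth_proj2 (\<lambda>x. (e \<bullet> x) *\<^sub>R e + (f \<bullet> x) *\<^sub>R f)" by (rule orth_proj2_plane[OF ne nf ef])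
      have "(\<exists>i. (e \<bullet> q $ i) *\<^sub>R e + (f \<bullet> q $ i) *\<^sub>R f \<noteq> 0) \<longrightarrow>
            (\<exists>j. ((e \<bullet> Fmap m U q $ j) *\<^sub>R e + (f \<bullet> Fmap m U q $ j) *\<^sub>R f) \<bullet> ((e \<bullet> q $ j) *\<^sub>R e + (f \<bullet> q $ j) *\<^sub>R f) \<ge> 0
              \<and> (e \<bullet> q $ j) *\<^sub>R e + (f \<bullet> q $ j) *\<^sub>R f \<noteq> 0)"
        using Fcond op qS by blast
      thus ?thesis using ex by (simp add: FAj)
    qed
    have fixj: "A *v (q $ j) = q $ j" for j
      by (rule rigid[OF oA dA mp sym noplane]) auto
    hence "Fmap m U q = q" by (simp add: FA act_def vec_eq_iff)
    thus "Z \<in> orbit_SO ` {q \<in> Sset m. Fmap m U q = q}" using qS Zq by blast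
  qed
qed


end
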